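(* Let $n\ge2$, let $\mathbb{K}$ be a field of characteristic not $2,3$ containing a primitive $n$-th root of unity $\epsilon_n$, and let $\mathscr{C}_n=\mathbb{K}[z]/(z^n-1)$ with multiplication $p(z)\circ q(z)=p(\epsilon_nz)q(\epsilon_nz)\mod z^n-1$. Let $\Delta(p)=p(1)p(\epsilon_n)\cdots p(\epsilon_n^{n-1})$. If $p$ is a nonzero idempotent of $(\mathscr{C}_n,\circ)$ with $p\not\equiv1$, then $\Delta(p)=1$, and the set of distinct eigenvalues of $L^\circ_p:q\mapsto p\circ q$ is exactly $\{\epsilon_n^i:0\le i\le n-1\}$. In particular, every nonzero idempotent of $\mathscr{C}_n$ is semi-simple.
   Context: An idempotent $p$ is semi-simple if $\mathscr{C}_n$ is the direct sum of the eigenspaces of $L^\circ_p$. *)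

theory Defs
  imports "HOL-Computational_Algebra.Polynomial"
begin

text \<open>The algebra C_n = K[z]/(z^n - 1) is represented by its canonical
representatives: polynomials of degree < n (i.e. reduced mod z^n - 1).\<close>

definition Cn :: "nat \<Rightarrow> 'a::field poly set" where
  "Cn n = {p. p mod (monom 1 n - 1) = p}"

definition circ :: "'a::field \<Rightarrow> nat \<Rightarrow> 'a poly \<Rightarrow> 'a poly \<Rightarrow> 'a poly" where
  "circ e n p q = (pcompose p [:0, e:] * pcompose q [:0, e:]) mod (monom 1 n - 1)"

definition primitive_root :: "nat \<Rightarrow> 'a::field \<Rightarrow> bool" where
  "primitive_root n e \<longleftrightarrow> e ^ n = 1 \<and> (\<forall>k. 0 < k \<and> k < n \<longrightarrow> e ^ k \<noteq> 1)"

definition Delta :: "'a::field \<Rightarrow> nat \<Rightarrow> 'a poly \<Rightarrow> 'a" where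
  "Delta e n p = (\<Prod>i<n. poly p (e ^ i))"

definition idempotent :: "'a::field \<Rightarrow> nat \<Rightarrow> 'a poly \<Rightarrow> bool" where
  "idempotent e n p \<longleftrightarrow> p \<in> Cn n \<and> circ e n p p = p"

definition eigenspace :: "'a::field \<Rightarrow> nat \<Rightarrow> 'a poly \<Rightarrow> 'a \<Rightarrow> 'a poly set" where
  "eigenspace e n p l = {q \<in> Cn n. circ e n p q = smult l q}"

definition eigenvalues :: "'a::field \<Rightarrow> nat \<Rightarrow> 'a poly \<Rightarrow> 'a set" where
  "eigenvalues e n p = {l. \<exists>q \<in> eigenspace e n p l. q \<noteq> 0}"

text \<open>Semi-simple: C_n is the (internal) direct sum of the eigenspaces of L_p,
  i.e. every element decomposes uniquely as a sum of eigenvectors, one from each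
  eigenspace.\<close>
definition semi_simple :: "'a::field \<Rightarrow> nat \<Rightarrow> 'a poly \<Rightarrow> bool" where
  "semi_simple e n p \<longleftrightarrow> finite (eigenvalues e n p) \<and>
     (\<forall>q \<in> Cn n. \<exists>!f. (\<forall>l \<in> eigenvalues e n p. f l \<in> eigenspace e n p l)
        \<and> (\<forall>l. l \<notin> eigenvalues e n p \<longrightarrow> f l = 0)
        \<and> q = (\<Sum>l \<in> eigenvalues e n p. f l))"

end

theory Submission imports Defs begin

lemma prim_ne0: "primitive_root n (e::'a::field) \<Longrightarrow> n \<ge> 1 \<Longrightarrow> e \<noteq> 0"
  unfolding primitive_root_def by (cases n) auto

lemma prim_pow_mod: "primitive_root n (e::'a::field) \<Longrightarrow> e ^ j = e ^ (j mod n)"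
proof -
  assume "primitive_root n e"
  hence "e ^ n = 1" unfolding primitive_root_def by auto
  have "e ^ j = e ^ (n * (j div n) + j mod n)" by simp
  also have "\<dots> = (e ^ n) ^ (j div n) * e ^ (j mod n)" by (simp only: power_add power_mult)
  also have "\<dots> = e ^ (j mod n)" by (simp add: \<open>e ^ n = 1\<close>)
  finally show ?thesis .
qed

lemma prim_inj: assumes "primitive_root n (e::'a::field)" "n \<ge> 1"
  shows "inj_on (\<lambda>j. e ^ j) {..<n}"
proof (rule inj_onI)
  have e0: "e \<noteq> 0" using prim_ne0 assms by blast
  have key: "i < j \<Longrightarrow> j < n \<Longrightarrow> e ^ i = e ^ j \<Longrightarrow> False" for i j
  proof -
    assume h: "i < j" "j < n" "e ^ i = e ^ j"
    have "e ^ j = e ^ i * e ^ (j - i)" using h(1) by (simp flip: power_add)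
    hence "e ^ (j - i) = 1" using h(3) e0 by simp
    thus False using assms(1) h unfolding primitive_root_def by auto
  qed
  fix i j assume "i \<in> {..<n}" "j \<in> {..<n}" "e ^ i = e ^ j"
  thus "i = j" using key[of i j] key[of j i] by (cases i j rule: linorder_cases) auto
qed

lemma card_roots: assumes "primitive_root n (e::'a::field)" "n \<ge> 1"
  shows "card ((\<lambda>j. e ^ j) ` {..<n}) = n"
  using card_image[OF prim_inj[OF assms]] by simp

lemma degree_m: "n \<ge> 1 \<Longrightarrow> degree (monom (1::'a::field) n - 1) = n"
proof -
  assume "n \<ge> 1"
  have "monom (1::'a) n - 1 = monom 1 n + (- 1)" by simp
  also have "degree \<dots> = n" using \<open>n \<ge> 1\<close>
    by (subst degree_add_eq_left) (auto simp: degree_monom_eq)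
  finally show ?thesis .
qed

lemma Cn_degree: "p \<in> Cn n \<Longrightarrow> n \<ge> 1 \<Longrightarrow> p \<noteq> 0 \<Longrightarrow> degree (p::'a::field poly) < n"
proof -
  assume h: "p \<in> Cn n" "n \<ge> 1" "p \<noteq> 0"
  have dm: "degree (monom (1::'a) n - 1) = n" using degree_m[OF h(2)] .
  hence m0: "monom (1::'a) n - 1 \<noteq> 0" using h(2) by (metis degree_0 not_one_le_zero)
  have pm: "p mod (monom 1 n - 1) = p" using h(1) unfolding Cn_def by simp
  show ?thesis using degree_mod_less[OF m0, of p] pm h(3) dm by simp
qed

lemma Cn_degree': "p \<in> Cn n \<Longrightarrow> n \<ge> 1 \<Longrightarrow> degree (p::'a::field poly) < n"
  using Cn_degree[of p n] by (cases "p = 0") auto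

lemma degree_Cn: "degree (p::'a::field poly) < n \<Longrightarrow> p \<in> Cn n"
proof (cases "n \<ge> 1")
  case True
  assume "degree p < n"
  thus ?thesis unfolding Cn_def by (simp add: mod_poly_less degree_m[OF True])
qed auto

lemma Cn_mod: "q mod (monom 1 n - 1) \<in> Cn n"
  unfolding Cn_def by simp

lemma Cn_smult: "q \<in> Cn n \<Longrightarrow> smult c q \<in> Cn n"
  unfolding Cn_def by (simp add: mod_smult_left)

lemma Cn_diff: "p \<in> Cn n \<Longrightarrow> q \<in> Cn n \<Longrightarrow> p - q \<in> Cn n"
  unfolding Cn_def by (simp add: poly_mod_diff_left)

lemma Cn_sum: "(\<And>x. x \<in> S \<Longrightarrow> f x \<in> Cn n) \<Longrightarrow> sum f S \<in> Cn n"
proof (induction S rule: infinite_finite_induct)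
  case (insert x F) thus ?case unfolding Cn_def by (simp add: poly_mod_add_left)
qed (auto simp: Cn_def)

lemma poly_mod_root: assumes "primitive_root n (e::'a::field)"
  shows "poly (q mod (monom 1 n - 1)) (e ^ j) = poly q (e ^ j)"
proof -
  have "e ^ n = 1" using assms unfolding primitive_root_def by auto
  have r: "poly (monom 1 n - 1) (e ^ j) = 0"
    by (simp add: poly_monom flip: power_mult) (metis power_mult mult.commute power_one \<open>e ^ n = 1\<close>)
  have "q = q div (monom 1 n - 1) * (monom 1 n - 1) + q mod (monom 1 n - 1)" by (rule div_mult_mod_eq[symmetric])
  hence "poly q (e ^ j) = poly (q div (monom 1 n - 1) * (monom 1 n - 1) + q mod (monom 1 n - 1)) (e ^ j)"
    by metis
  thus ?thesis using r by simp
qed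

lemma poly_circ: assumes "primitive_root n (e::'a::field)"
  shows "poly (circ e n p q) (e ^ j) = poly p (e ^ Suc j) * poly q (e ^ Suc j)"
  unfolding circ_def using poly_mod_root[OF assms]
  by (simp add: poly_pcompose mult.commute)

lemma Cn_eqI: assumes "primitive_root n (e::'a::field)" "n \<ge> 1" "p \<in> Cn n" "q \<in> Cn n"
  "\<And>j. j < n \<Longrightarrow> poly p (e ^ j) = poly q (e ^ j)"
  shows "p = q"
  apply (rule poly_eqI_degree[where A = "(\<lambda>j. e ^ j) ` {..<n}"])
  using assms card_roots[OF assms(1,2)] Cn_degree'[OF assms(3,2)] Cn_degree'[OF assms(4,2)] by auto


definition lagr :: "'a::field \<Rightarrow> nat \<Rightarrow> (nat \<Rightarrow> 'a) \<Rightarrow> 'a poly" where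
  "lagr e n a = (\<Sum>j<n. smult (a j / (\<Prod>k\<in>{..<n}-{j}. e ^ j - e ^ k))
                          (\<Prod>k\<in>{..<n}-{j}. [:- (e ^ k), 1:]))"

lemma lagr_Cn: assumes "n \<ge> 1" shows "lagr e n a \<in> Cn n"
proof -
  have "degree (lagr e n a) \<le> n - 1"
    unfolding lagr_def
  proof (rule degree_sum_le)
    fix j assume j: "j \<in> {..<n}"
    have "degree (\<Prod>k\<in>{..<n}-{j}. [:- (e ^ k), 1:]) \<le> (\<Sum>k\<in>{..<n}-{j}. degree [:- (e ^ k), 1:])"
      using degree_prod_sum_le[of "{..<n}-{j}" "\<lambda>k. [:- (e ^ k), 1:]"] by (simp add: o_def)
    also have "\<dots> = n - 1" using j by simp
    finally show "degree (smult (a j / (\<Prod>k\<in>{..<n}-{j}. e ^ j - e ^ k))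
                          (\<Prod>k\<in>{..<n}-{j}. [:- (e ^ k), 1:])) \<le> n - 1"
      using degree_smult_le order_trans by blast
  qed simp
  thus ?thesis using assms by (intro degree_Cn) linarith
qed

lemma lagr_eval: assumes "primitive_root n (e::'a::field)" "n \<ge> 1" "i < n"
  shows "poly (lagr e n a) (e ^ i) = a i"
proof -
  have inj: "inj_on (\<lambda>j. e ^ j) {..<n}" by (rule prim_inj[OF assms(1,2)])
  define D where "D j = (\<Prod>k\<in>{..<n}-{j}. e ^ j - e ^ k)" for j
  have tm: "poly (smult (a j / D j) (\<Prod>k\<in>{..<n}-{j}. [:- (e ^ k), 1:])) (e ^ i)
      = (if j = i then a i else 0)" if j: "j < n" for j
  proof (cases "j = i")
    case True
    have "D i \<noteq> 0" unfolding D_def using inj assms(3)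
      by (auto simp: inj_on_def)
    thus ?thesis using True by (simp add: poly_prod D_def)
  next
    case False
    have "(\<Prod>k\<in>{..<n}-{j}. e ^ i - e ^ k) = 0"
      by (rule prod_zero) (use False assms(3) in auto)
    thus ?thesis using False by (simp add: poly_prod)
  qed
  have "poly (lagr e n a) (e ^ i) = (\<Sum>j<n. poly (smult (a j / D j) (\<Prod>k\<in>{..<n}-{j}. [:- (e ^ k), 1:])) (e ^ i))"
    unfolding lagr_def poly_sum D_def by (rule refl)
  also have "\<dots> = (\<Sum>j<n. (if j = i then a i else 0))"
    by (rule sum.cong[OF refl], rule tm) simp
  also have "\<dots> = a i" using assms(3) by simp
  finally show ?thesis .
qed

lemma geom_root: assumes "(x::'a::field) ^ n = 1"
  shows "(\<Sum>i<n. x ^ i) = (if x = 1 then of_nat n else 0)"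
  using geometric_sum[of x n] assms by auto

lemma char_n: assumes "primitive_root n (e::'a::field)" "n \<ge> 1"
  shows "(of_nat n :: 'a) \<noteq> 0"
proof
  assume n0: "(of_nat n :: 'a) = 0"
  have en: "e ^ n = 1" using assms unfolding primitive_root_def by auto
  define q where "q = lagr e n (\<lambda>j. if j = 0 then 1 else 0)"
  have "(\<Sum>i<n. poly q (e ^ i)) = (\<Sum>i<n. (if i = 0 then 1 else 0::'a))"
    by (rule sum.cong) (auto simp: q_def lagr_eval[OF assms])
  also have "\<dots> = 1" using assms(2) by simp
  finally have s1: "(\<Sum>i<n. poly q (e ^ i)) = 1" .
  have "(\<Sum>i<n. poly q (e ^ i)) = (\<Sum>i<n. \<Sum>k\<le>degree q. coeff q k * (e ^ k) ^ i)"
    by (rule sum.cong) (auto simp: poly_altdef power_mult[symmetric] mult.commute)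
  also have "\<dots> = (\<Sum>k\<le>degree q. coeff q k * (\<Sum>i<n. (e ^ k) ^ i))"
    by (subst sum.swap) (simp add: sum_distrib_left)
  also have "\<dots> = 0"
  proof (rule sum.neutral, rule ballI)
    fix k
    have "(e ^ k) ^ n = 1" by (metis power_mult mult.commute power_one en)
    hence "(\<Sum>i<n. (e ^ k) ^ i) = 0" using geom_root[of "e ^ k" n] n0 by simp
    thus "coeff q k * (\<Sum>i<n. (e ^ k) ^ i) = 0" by simp
  qed
  finally show False using s1 by simp
qed


locale idem =
  fixes e :: "'a::field" and n :: nat and p :: "'a poly"
  assumes prim: "primitive_root n e" and n1: "n \<ge> 1"
    and idp: "idempotent e n p" and pnz: "p \<noteq> 0"
begin

definition a where "a j = poly p (e ^ j)"
definition A where "A j = (\<Prod>i<j. a (Suc i))"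

lemma en: "e ^ n = 1" using prim unfolding primitive_root_def by auto

lemma per: "poly q (e ^ (j + n)) = poly q (e ^ j)"
  by (simp add: power_add en)

lemma per0: "poly q (e ^ n) = poly q 1"
  by (simp add: en)

lemma pCn: "p \<in> Cn n" using idp unfolding idempotent_def by auto

lemma rel: "a j = a (Suc j) * a (Suc j)"
proof -
  have "circ e n p p = p" using idp unfolding idempotent_def by auto
  hence "poly p (e ^ j) = poly (circ e n p p) (e ^ j)" by simp
  thus ?thesis unfolding a_def poly_circ[OF prim] .
qed

lemma a_nz: "a j \<noteq> 0"
proof
  assume a0: "a j = 0"
  have z: "a (j + k) = 0" for k
  proof (induction k)
    case 0 show ?case using a0 by simp
  next
    case (Suc k)
    have "a (Suc (j + k)) * a (Suc (j + k)) = 0" using rel[of "j + k"] Suc.IH by metis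
    thus ?case by simp
  qed
  have "a i = 0" for i
  proof -
    have pt: "a (i + n * t) = a i" for t
    proof (induction t)
      case (Suc t)
      have "a (i + n * Suc t) = a (i + n * t + n)" by (simp add: algebra_simps)
      also have "\<dots> = a (i + n * t)" unfolding a_def by (rule per)
      finally show ?case using Suc by simp
    qed simp
    have ge: "n * (j + 1) \<ge> j + 1" using mult_le_mono1[OF n1, of "j + 1"] by simp
    have "j + (i + n * (j + 1) - j) = i + n * (j + 1)" using ge by simp
    hence "a (i + n * (j + 1)) = 0" using z[of "i + n * (j + 1) - j"] by simp
    hence "a i = 0" using pt[of "j + 1"] by simp
    thus ?thesis .
  qed
  hence "p = 0" using Cn_eqI[OF prim n1 pCn, of 0] by (simp add: a_def Cn_def)
  thus False using pnz by simp
qed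

lemma prod_shift: "(\<Prod>i<n. a (Suc i)) = (\<Prod>i<n. a i)"
proof -
  have "a 0 * (\<Prod>i<n. a (Suc i)) = (\<Prod>i<Suc n. a i)"
    by (rule prod.lessThan_Suc_shift[symmetric])
  also have "\<dots> = (\<Prod>i<n. a i) * a n" by (rule prod.lessThan_Suc)
  also have "a n = a 0" unfolding a_def using per[of p 0] by simp
  finally show ?thesis using a_nz[of 0] by (simp add: mult.commute)
qed

lemma P1: "(\<Prod>i<n. a i) = 1"
proof -
  have "(\<Prod>i<n. a i) = (\<Prod>i<n. a (Suc i) * a (Suc i))" by (rule prod.cong[OF refl]) (rule rel)
  also have "\<dots> = (\<Prod>i<n. a i) * (\<Prod>i<n. a i)" by (simp add: prod.distrib prod_shift)
  finally have "(\<Prod>i<n. a i) = (\<Prod>i<n. a i) * (\<Prod>i<n. a i)" .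
  moreover have "(\<Prod>i<n. a i) \<noteq> 0" using a_nz by simp
  ultimately show ?thesis by (metis mult_cancel_right1)
qed

lemma Delta1: "Delta e n p = 1"
  using P1 unfolding Delta_def a_def by simp

lemma A_Suc: "A (Suc j) = A j * a (Suc j)" unfolding A_def by simp
lemma A_nz: "A j \<noteq> 0" unfolding A_def using a_nz by simp
lemma An: "A n = 1" unfolding A_def using prod_shift P1 by simp

definition c where "c l j = l ^ j / A j"
definition v where "v l = lagr e n (c l)"

lemma v_Cn: "v l \<in> Cn n" unfolding v_def using lagr_Cn n1 by blast

lemma v_eval: "j < n \<Longrightarrow> poly (v l) (e ^ j) = c l j"
  unfolding v_def using lagr_eval[OF prim n1] by blast

lemma eig_char: "q \<in> eigenspace e n p l \<longleftrightarrow>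
   q \<in> Cn n \<and> (\<forall>j<n. a (Suc j) * poly q (e ^ Suc j) = l * poly q (e ^ j))"
proof
  assume "q \<in> eigenspace e n p l"
  hence h: "q \<in> Cn n" "circ e n p q = smult l q" unfolding eigenspace_def by auto
  have "a (Suc j) * poly q (e ^ Suc j) = l * poly q (e ^ j)" for j
    using arg_cong[OF h(2), of "\<lambda>r. poly r (e ^ j)"] unfolding poly_circ[OF prim] a_def by simp
  thus "q \<in> Cn n \<and> (\<forall>j<n. a (Suc j) * poly q (e ^ Suc j) = l * poly q (e ^ j))" using h by auto
next
  assume h: "q \<in> Cn n \<and> (\<forall>j<n. a (Suc j) * poly q (e ^ Suc j) = l * poly q (e ^ j))"
  have "circ e n p q = smult l q"
  proof (rule Cn_eqI[OF prim n1])
    show "circ e n p q \<in> Cn n" unfolding circ_def by (rule Cn_mod)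
    show "smult l q \<in> Cn n" using h Cn_smult by blast
    fix j assume "j < n"
    thus "poly (circ e n p q) (e ^ j) = poly (smult l q) (e ^ j)"
      using h unfolding poly_circ[OF prim] a_def by simp
  qed
  thus "q \<in> eigenspace e n p l" using h unfolding eigenspace_def by auto
qed

lemma eig_rel_all: "q \<in> eigenspace e n p l \<Longrightarrow> a (Suc j) * poly q (e ^ Suc j) = l * poly q (e ^ j)"
proof -
  assume "q \<in> eigenspace e n p l"
  hence h: "circ e n p q = smult l q" unfolding eigenspace_def by auto
  show ?thesis
    using arg_cong[OF h, of "\<lambda>r. poly r (e ^ j)"] unfolding poly_circ[OF prim] a_def by simp
qed

lemma eig_vals: "q \<in> eigenspace e n p l \<Longrightarrow> poly q (e ^ j) * A j = l ^ j * poly q 1"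
proof (induction j)
  case 0 then show ?case by (simp add: A_def)
next
  case (Suc j)
  have "poly q (e ^ Suc j) * A (Suc j) = (a (Suc j) * poly q (e ^ Suc j)) * A j"
    by (simp add: A_Suc algebra_simps)
  also have "\<dots> = l * (poly q (e ^ j) * A j)" using eig_rel_all[OF Suc(2)] by (simp add: algebra_simps)
  finally show ?case using Suc by simp
qed

lemma eig_form: "q \<in> eigenspace e n p l \<Longrightarrow> q = smult (poly q 1) (v l)"
proof -
  assume q: "q \<in> eigenspace e n p l"
  show ?thesis
  proof (rule Cn_eqI[OF prim n1])
    show "q \<in> Cn n" using q unfolding eigenspace_def by auto
    show "smult (poly q 1) (v l) \<in> Cn n" using v_Cn Cn_smult by blast
    fix j assume "j < n"
    have "poly q (e ^ j) = l ^ j * poly q 1 / A j" using eig_vals[OF q, of j] A_nz[of j]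
      by (simp add: field_simps)
    thus "poly q (e ^ j) = poly (smult (poly q 1) (v l)) (e ^ j)"
      using v_eval[OF \<open>j < n\<close>] by (simp add: c_def)
  qed
qed

lemma v_eig: assumes "l ^ n = 1" shows "v l \<in> eigenspace e n p l"
  unfolding eig_char
proof (intro conjI allI impI)
  show "v l \<in> Cn n" by (rule v_Cn)
  fix j assume j: "j < n"
  have vs: "poly (v l) (e ^ Suc j) = c l (Suc j)"
  proof (cases "Suc j < n")
    case True then show ?thesis by (rule v_eval)
  next
    case False
    hence "Suc j = n" using j by simp
    hence "poly (v l) (e ^ Suc j) = poly (v l) (e ^ 0)" using per0 by simp
    also have "\<dots> = c l 0" using n1 by (intro v_eval) simp
    also have "\<dots> = c l (Suc j)" using \<open>Suc j = n\<close> assms An by (simp add: c_def A_def)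
    finally show ?thesis .
  qed
  show "a (Suc j) * poly (v l) (e ^ Suc j) = l * poly (v l) (e ^ j)"
    unfolding vs v_eval[OF j] c_def A_Suc using a_nz[of "Suc j"] A_nz[of j]
    by (simp add: field_simps)
qed

lemma v_nz: "v l \<noteq> 0"
proof
  assume "v l = 0"
  hence "poly (v l) (e ^ 0) = 0" by simp
  thus False using v_eval[of 0 l] n1 by (simp add: c_def A_def)
qed

lemma eigval_pow: assumes "l \<in> eigenvalues e n p" shows "l ^ n = 1"
proof -
  obtain q where q: "q \<in> eigenspace e n p l" "q \<noteq> 0"
    using assms unfolding eigenvalues_def by auto
  have "poly q 1 \<noteq> 0"
  proof
    assume "poly q 1 = 0"
    hence "q = 0" using eig_form[OF q(1)] by simp
    thus False using q by simp
  qed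
  moreover have "poly q 1 * A n = l ^ n * poly q 1" using eig_vals[OF q(1), of n] per0 by simp
  ultimately show ?thesis using An by simp
qed

definition Lam where "Lam = (\<lambda>i. e ^ i) ` {..<n}"

lemma Lam_eq: "Lam = {e ^ i | i. i < n}" unfolding Lam_def by auto

lemma root_in_Lam: assumes "l ^ n = 1" shows "l \<in> Lam"
proof (rule ccontr)
  assume nl: "l \<notin> Lam"
  let ?m = "monom (1::'a) n - 1"
  have m0: "?m \<noteq> 0" using degree_m[OF n1] n1 by (metis degree_0 not_one_le_zero)
  have sub: "insert l Lam \<subseteq> {x. poly ?m x = 0}"
  proof
    fix x assume x: "x \<in> insert l Lam"
    have "x ^ n = 1"
    proof (cases "x = l")
      case True thus ?thesis using assms by simp
    next
      case False
      then obtain i where "x = e ^ i" using x by (auto simp: Lam_def)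
      thus ?thesis by (metis power_mult mult.commute power_one en)
    qed
    thus "x \<in> {x. poly ?m x = 0}" by (simp add: poly_monom)
  qed
  have "n + 1 = card (insert l Lam)" using nl card_roots[OF prim n1] by (simp add: Lam_def)
  also have "\<dots> \<le> card {x. poly ?m x = 0}"
    by (rule card_mono[OF poly_roots_finite[OF m0] sub])
  also have "\<dots> \<le> n" using card_poly_roots_bound[OF m0] degree_m[OF n1] by (metis (no_types))
  finally show False by simp
qed

lemma eigenvalues_eq: "eigenvalues e n p = Lam"
proof
  show "eigenvalues e n p \<subseteq> Lam" using eigval_pow root_in_Lam by blast
  show "Lam \<subseteq> eigenvalues e n p"
  proof
    fix l assume "l \<in> Lam"
    then obtain i where "l = e ^ i" by (auto simp: Lam_def)
    hence "l ^ n = 1" by (metis power_mult mult.commute power_one en)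
    thus "l \<in> eigenvalues e n p" unfolding eigenvalues_def using v_eig v_nz by blast
  qed
qed

end

context idem begin

lemma Lam_nz: "l \<in> Lam \<Longrightarrow> l \<noteq> 0"
  unfolding Lam_def using prim_ne0[OF prim n1] by auto

lemma Lam_pow: "l \<in> Lam \<Longrightarrow> l ^ n = 1"
  unfolding Lam_def by (auto, metis power_mult mult.commute power_one en)

lemma orth1: assumes "l \<in> Lam" "m \<in> Lam"
  shows "(\<Sum>k<n. (l / m) ^ k) = (if l = m then of_nat n else 0)"
proof -
  have "(l / m) ^ n = 1" using Lam_pow assms by (simp add: power_divide)
  moreover have "(l / m = 1) = (l = m)" using Lam_nz[OF assms(2)] by auto
  ultimately show ?thesis using geom_root[of "l / m" n] by simp
qed

lemma orth2: assumes "j < n" "k < n"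
  shows "(\<Sum>l\<in>Lam. l ^ j / l ^ k) = (if j = k then of_nat n else 0)"
proof -
  have "(\<Sum>l\<in>Lam. l ^ j / l ^ k) = (\<Sum>i<n. (e ^ i) ^ j / (e ^ i) ^ k)"
    unfolding Lam_def by (rule sum.reindex[OF prim_inj[OF prim n1], unfolded o_def])
  also have "\<dots> = (\<Sum>i<n. (e ^ j / e ^ k) ^ i)"
    by (rule sum.cong) (auto simp: power_divide power_mult[symmetric] mult.commute)
  also have "\<dots> = (if j = k then of_nat n else 0)"
  proof -
    have e0: "e \<noteq> 0" using prim_ne0[OF prim n1] .
    have ej: "(e ^ j) ^ n = 1" "(e ^ k) ^ n = 1" by (metis power_mult mult.commute power_one en)+
    have "(e ^ j / e ^ k) ^ n = 1" by (simp add: power_divide ej)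
    moreover have "(e ^ j / e ^ k = 1) = (j = k)"
      using prim_inj[OF prim n1] assms e0 by (auto simp: inj_on_def)
    ultimately show ?thesis using geom_root[of "e ^ j / e ^ k" n] by simp
  qed
  finally show ?thesis .
qed

lemma smult_eig: "q \<in> eigenspace e n p l \<Longrightarrow> smult s q \<in> eigenspace e n p l"
  unfolding eig_char using Cn_smult by (auto simp: algebra_simps)

lemma N_nz: "(of_nat n :: 'a) \<noteq> 0" by (rule char_n[OF prim n1])

lemma semi: "semi_simple e n p"
  unfolding semi_simple_def eigenvalues_eq
proof (intro conjI ballI)
  show "finite Lam" unfolding Lam_def by simp
  fix q :: "'a poly" assume q: "q \<in> Cn n"
  define N where "N = (of_nat n :: 'a)"
  define d where "d k = poly q (e ^ k) * A k" for k
  define t where "t l = (\<Sum>k<n. d k / l ^ k) / N" for l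
  define f where "f l = (if l \<in> Lam then smult (t l) (v l) else 0)" for l
  let ?P = "\<lambda>g. (\<forall>l\<in>Lam. g l \<in> eigenspace e n p l) \<and> (\<forall>l. l \<notin> Lam \<longrightarrow> g l = 0) \<and> q = sum g Lam"
  have Nnz: "N \<noteq> 0" using N_nz N_def by simp
  have fP: "?P f"
  proof (intro conjI allI impI ballI)
    fix l assume "l \<in> Lam"
    thus "f l \<in> eigenspace e n p l" unfolding f_def using smult_eig v_eig Lam_pow by auto
  next
    fix l assume "l \<notin> Lam" thus "f l = 0" unfolding f_def by simp
  next
    show "q = sum f Lam"
    proof (rule Cn_eqI[OF prim n1 q])
      show "sum f Lam \<in> Cn n" unfolding f_def using v_Cn Cn_smult by (intro Cn_sum) (auto simp: Cn_def)
      fix j assume j: "j < n"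
      have "poly (sum f Lam) (e ^ j) = (\<Sum>l\<in>Lam. t l * l ^ j) / A j"
        unfolding poly_sum f_def by (simp add: v_eval[OF j] c_def sum_divide_distrib)
      also have "(\<Sum>l\<in>Lam. t l * l ^ j) = (\<Sum>l\<in>Lam. \<Sum>k<n. d k * (l ^ j / l ^ k)) / N"
        unfolding t_def sum_divide_distrib by (rule sum.cong) (auto simp: sum_distrib_right)
      also have "\<dots> = (\<Sum>k<n. d k * (\<Sum>l\<in>Lam. l ^ j / l ^ k)) / N"
        by (subst sum.swap) (simp add: sum_distrib_left)
      also have "\<dots> = (\<Sum>k<n. if k = j then d j * N else 0) / N"
        by (rule arg_cong[where f = "\<lambda>x. x / N"], rule sum.cong) (auto simp: orth2 j N_def)
      also have "\<dots> = d j" using j Nnz by simp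
      finally show "poly q (e ^ j) = poly (sum f Lam) (e ^ j)"
        unfolding d_def using A_nz[of j] by simp
    qed
  qed
  have uniq: "g = f" if gP: "?P g" for g
  proof
    fix m show "g m = f m"
    proof (cases "m \<in> Lam")
      case False thus ?thesis using gP unfolding f_def by simp
    next
      case True
      define s where "s l = poly (g l) 1" for l
      have gf: "g l = smult (s l) (v l)" if "l \<in> Lam" for l
        unfolding s_def using eig_form gP that by blast
      have dk: "d k = (\<Sum>l\<in>Lam. s l * l ^ k)" if k: "k < n" for k
      proof -
        have "poly q (e ^ k) = (\<Sum>l\<in>Lam. poly (g l) (e ^ k))" using gP poly_sum by metis
        also have "\<dots> = (\<Sum>l\<in>Lam. s l * (l ^ k / A k))"
          by (rule sum.cong) (auto simp: gf v_eval[OF k] c_def)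
        finally show ?thesis unfolding d_def using A_nz[of k]
          by (simp add: sum_divide_distrib[symmetric])
      qed
      have "t m = (\<Sum>k<n. \<Sum>l\<in>Lam. s l * (l / m) ^ k) / N"
        unfolding t_def
        by (rule arg_cong[where f = "\<lambda>x. x / N"], rule sum.cong)
           (auto simp: dk sum_divide_distrib power_divide)
      also have "\<dots> = (\<Sum>l\<in>Lam. s l * (\<Sum>k<n. (l / m) ^ k)) / N"
        by (subst sum.swap) (simp add: sum_distrib_left)
      also have "\<dots> = (\<Sum>l\<in>Lam. if l = m then s m * N else 0) / N"
        by (rule arg_cong[where f = "\<lambda>x. x / N"], rule sum.cong) (auto simp: orth1 True N_def)
      also have "\<dots> = s m" using True Nnz unfolding Lam_def by simp
      finally show ?thesis using gf[OF True] True unfolding f_def by simp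
    qed
  qed
  show "\<exists>!f. (\<forall>l\<in>Lam. f l \<in> eigenspace e n p l) \<and> (\<forall>l. l \<notin> Lam \<longrightarrow> f l = 0) \<and> q = sum f Lam"
    using fP uniq by blast
qed

end

theorem proposition7p2:
  fixes e :: "'a::field" and n :: nat
  assumes "n \<ge> 2"
    and "CHAR('a) \<noteq> 2" and "CHAR('a) \<noteq> 3"
    and "primitive_root n e"
  shows "(\<forall>p. idempotent e n p \<and> p \<noteq> 0 \<and> p \<noteq> 1 \<longrightarrow>
            Delta e n p = 1 \<and> eigenvalues e n p = {e ^ i | i. i < n})
       \<and> (\<forall>p. idempotent e n p \<and> p \<noteq> 0 \<longrightarrow> semi_simple e n p)"
proof (intro conjI allI impI)
  fix p assume h: "idempotent e n p \<and> p \<noteq> 0 \<and> p \<noteq> 1"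
  interpret idem e n p using h assms by unfold_locales auto
  show "Delta e n p = 1" by (rule Delta1)
  show "eigenvalues e n p = {e ^ i | i. i < n}" using eigenvalues_eq Lam_eq by simp
next
  fix p assume h: "idempotent e n p \<and> p \<noteq> 0"
  interpret idem e n p using h assms by unfold_locales auto
  show "semi_simple e n p" by (rule semi)
qed

end
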